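(* Let $A\in GL_n(\mathbb{C})$ have all eigenvalues equal to $1$. Then $J(A\otimes A)\leqslant J(A)$ and $J(A\otimes A)\leqslant J(A)^2+(1-J(A))^2$.
   Context: For $B\in GL_N(\mathbb{C})$, $J(B)$ denotes the number of Jordan blocks in the Jordan normal form of $B$ divided by $N$. $A\otimes A\in GL_{n^2}(\mathbb{C})$ is the Kronecker product. *)

theory Defs
  imports "Jordan_Normal_Form.Jordan_Normal_Form_Uniqueness"
begin

definition kron_mat :: "'a :: times mat \<Rightarrow> 'a mat \<Rightarrow> 'a mat" where
  "kron_mat A B = mat (dim_row A * dim_row B) (dim_col A * dim_col B)
     (\<lambda>(i, j). A $$ (i div dim_row B, j div dim_col B) * B $$ (i mod dim_row B, j mod dim_col B))"

text \<open>Number of Jordan blocks of a square complex matrix (well defined by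
  existence and uniqueness of the Jordan normal form up to block permutation).\<close>
definition num_jordan_blocks :: "complex mat \<Rightarrow> nat" where
  "num_jordan_blocks B = length (SOME n_as. jordan_nf B n_as)"

definition J :: "complex mat \<Rightarrow> real" where
  "J B = real (num_jordan_blocks B) / real (dim_row B)"

end

theory Submission imports Defs "Jordan_Normal_Form.Jordan_Normal_Form_Existence"
begin
lemma sum_div_mod_split:
  fixes N M :: nat and f :: "nat \<Rightarrow> 'a :: comm_monoid_add"
  shows "(\<Sum>j<N*M. f j) = (\<Sum>u<N. \<Sum>v<M. f (u*M+v)) "
proof (induction N)
  case 0 then show ?case by simp
next
  case (Suc N)
  have "{..<Suc N * M} = {..<N*M} \<union> {N*M..<N*M+M}" by auto
  hence "(\<Sum>j<Suc N*M. f j) = (\<Sum>j<N*M. f j) + (\<Sum>j\<in>{N*M..<N*M+M}. f j)"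
    by (simp add: sum.union_disjoint[of "{..<N*M}" "{N*M..<N*M+M}"] ivl_disj_int)
  also have "(\<Sum>j\<in>{N*M..<N*M+M}. f j) = (\<Sum>v<M. f (N*M+v))"
    by (rule sum.reindex_bij_witness[of _ "\<lambda>j. j + N*M" "\<lambda>j. j - N*M"], auto)
  finally show ?case using Suc by simp
qed

lemma kron_dims[simp]: "dim_row (kron_mat A B) = dim_row A * dim_row B"
  "dim_col (kron_mat A B) = dim_col A * dim_col B"
  unfolding kron_mat_def by auto

lemma kron_index: "i < dim_row A * dim_row B \<Longrightarrow> j < dim_col A * dim_col B \<Longrightarrow>
  kron_mat A B $$ (i,j) = A $$ (i div dim_row B, j div dim_col B) * B $$ (i mod dim_row B, j mod dim_col B)"
  unfolding kron_mat_def by auto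

lemma kron_carrier: "A \<in> carrier_mat n n \<Longrightarrow> B \<in> carrier_mat m m \<Longrightarrow> kron_mat A B \<in> carrier_mat (n*m) (n*m)"
  by auto

lemma div_mod_lt: "i < n * (m::nat) \<Longrightarrow> i div m < n \<and> i mod m < m"
  by (metis less_mult_imp_div_less mod_less_divisor mult.commute mult_zero_right not_gr_zero not_less0)

lemma kron_mult:
  fixes A C :: "'a :: comm_ring_1 mat"
  assumes A: "A \<in> carrier_mat n n" and C: "C \<in> carrier_mat n n"
    and B: "B \<in> carrier_mat m m" and D: "D \<in> carrier_mat m m"
  shows "kron_mat (A * C) (B * D) = kron_mat A B * kron_mat C D"
proof (rule eq_matI)
  fix i j assume i: "i < dim_row (kron_mat A B * kron_mat C D)" and j: "j < dim_col (kron_mat A B * kron_mat C D)"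
  have i': "i < n*m" and j': "j < n*m" using i j A B C D by auto
  note ii = div_mod_lt[OF i'] and jj = div_mod_lt[OF j']
  have "(kron_mat A B * kron_mat C D) $$ (i,j) = (\<Sum>t<n*m. kron_mat A B $$ (i,t) * kron_mat C D $$ (t,j))"
    using A B C D i' j' by (simp add: scalar_prod_def row_def col_def lessThan_atLeast0)
  also have "\<dots> = (\<Sum>u<n. \<Sum>v<m. kron_mat A B $$ (i,u*m+v) * kron_mat C D $$ (u*m+v,j))"
    by (rule sum_div_mod_split)
  also have "\<dots> = (\<Sum>u<n. \<Sum>v<m. (A $$ (i div m, u) * C $$ (u, j div m)) * (B $$ (i mod m, v) * D $$ (v, j mod m)))"
  proof (intro sum.cong refl)
    fix u v assume u: "u \<in> {..<n}" and v: "v \<in> {..<m}"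
    have "u*m+v < Suc u * m" using v by simp
    also have "Suc u * m \<le> n*m" using u by (intro mult_le_mono1) simp
    finally have uv: "u*m+v < n*m" .
    have d: "(u*m+v) div m = u" "(u*m+v) mod m = v" "(v + m * u) div m = u" "v mod m = v" using v by auto
    show "kron_mat A B $$ (i,u*m+v) * kron_mat C D $$ (u*m+v,j) = (A $$ (i div m, u) * C $$ (u, j div m)) * (B $$ (i mod m, v) * D $$ (v, j mod m))"
      using A B C D i' j' uv by (simp add: kron_index d ac_simps)
  qed
  also have "\<dots> = (\<Sum>u<n. A $$ (i div m, u) * C $$ (u, j div m)) * (\<Sum>v<m. B $$ (i mod m, v) * D $$ (v, j mod m))"
    by (simp add: sum_product)
  also have "\<dots> = (A * C) $$ (i div m, j div m) * (B * D) $$ (i mod m, j mod m)"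
    using A B C D ii jj by (simp add: scalar_prod_def row_def col_def lessThan_atLeast0)
  also have "\<dots> = kron_mat (A * C) (B * D) $$ (i,j)"
    using A B C D i' j' by (simp add: kron_index)
  finally show "kron_mat (A * C) (B * D) $$ (i, j) = (kron_mat A B * kron_mat C D) $$ (i, j)" by simp
qed (insert A B C D, auto)

lemma kron_one: "kron_mat (1\<^sub>m n) (1\<^sub>m m) = (1\<^sub>m (n*m) :: 'a :: comm_ring_1 mat)"
proof (rule eq_matI)
  fix i j assume i: "i < dim_row (1\<^sub>m (n*m) :: 'a mat)" and j: "j < dim_col (1\<^sub>m (n*m) :: 'a mat)"
  hence i': "i < n*m" and j': "j < n*m" by auto
  note ii = div_mod_lt[OF i'] and jj = div_mod_lt[OF j']
  have "(i = j) = (i div m = j div m \<and> i mod m = j mod m)"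
    by (metis div_mult_mod_eq)
  thus "kron_mat (1\<^sub>m n) (1\<^sub>m m) $$ (i, j) = (1\<^sub>m (n*m) :: 'a mat) $$ (i, j)"
    using i' j' ii jj by (simp add: kron_index)
qed auto

lemma similar_kron:
  fixes A B :: "'a :: comm_ring_1 mat"
  assumes "similar_mat A B"
  shows "similar_mat (kron_mat A A) (kron_mat B B)"
proof -
  from similar_matD[OF assms] obtain n P Q where c: "{A,B,P,Q} \<subseteq> carrier_mat n n"
    and PQ: "P * Q = 1\<^sub>m n" and QP: "Q * P = 1\<^sub>m n" and AB: "A = P * B * Q" by auto
  hence A: "A \<in> carrier_mat n n" and B: "B \<in> carrier_mat n n" and P: "P \<in> carrier_mat n n"
    and Q: "Q \<in> carrier_mat n n" by auto
  have "kron_mat A A = kron_mat (P * B) (P * B) * kron_mat Q Q"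
    unfolding AB by (rule kron_mult, insert P B Q, auto)
  also have "kron_mat (P * B) (P * B) = kron_mat P P * kron_mat B B"
    by (rule kron_mult[OF P B P B])
  finally have e: "kron_mat A A = kron_mat P P * kron_mat B B * kron_mat Q Q" .
  have e1: "kron_mat P P * kron_mat Q Q = 1\<^sub>m (n*n)"
    using kron_mult[OF P Q P Q] PQ kron_one by metis
  have e2: "kron_mat Q Q * kron_mat P P = 1\<^sub>m (n*n)"
    using kron_mult[OF Q P Q P] QP kron_one by metis
  show ?thesis unfolding similar_mat_def similar_mat_wit_def Let_def
    by (rule exI[of _ "kron_mat P P"], rule exI[of _ "kron_mat Q Q"], insert e e1 e2 A B P Q, auto)
qed

lemma kernel_dim_le_inj:
  fixes C :: "'a::field mat"
  assumes C: "C \<in> carrier_mat nr nc" and P: "P \<in> carrier_mat d nc"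
  and inj: "\<And>v. v \<in> mat_kernel C \<Longrightarrow> P *\<^sub>v v = 0\<^sub>v d \<Longrightarrow> v = 0\<^sub>v nc"
  shows "kernel_dim C \<le> d"
proof -
  interpret K: kernel nr nc C by (unfold_locales, rule C)
  interpret W: vec_space "TYPE('a)" d .
  obtain B where fB: "finite B" and bas: "K.basis B" using kernel_basis_exists[OF C] by blast
  have dimK: "kernel_dim C = card B" using K.Ker.dim_basis[OF fB bas] by simp
  let ?T = "\<lambda>v. P *\<^sub>v v"
  have P0: "P *\<^sub>v 0\<^sub>v nc = 0\<^sub>v d" using P by (intro eq_vecI, auto)
  have kc: "\<And>v. v \<in> mat_kernel C \<Longrightarrow> v \<in> carrier_vec nc" using mat_kernelD[OF C] by blast
  interpret L: linear_map class_ring K.VK W.V ?T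
  proof (unfold_locales)
    show "?T \<in> module_hom class_ring K.VK W.V"
      unfolding module_hom_def using P kc
      by (auto simp: mult_add_distrib_mat_vec mult_mat_vec)
  qed
  have injT: "inj_on ?T (mat_kernel C)"
  proof (rule inj_onI)
    fix x y assume x: "x \<in> mat_kernel C" and y: "y \<in> mat_kernel C" and e: "?T x = ?T y"
    have Cx: "C *\<^sub>v x = 0\<^sub>v nr" and Cy: "C *\<^sub>v y = 0\<^sub>v nr" using mat_kernelD[OF C] x y by auto
    have xc: "x \<in> carrier_vec nc" and yc: "y \<in> carrier_vec nc" using kc x y by auto
    have "C *\<^sub>v (x - y) = C *\<^sub>v x - C *\<^sub>v y" using C xc yc by (simp add: mult_minus_distrib_mat_vec)
    hence "x - y \<in> mat_kernel C" using Cx Cy xc yc C by (auto intro!: mat_kernelI)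
    moreover have "?T (x - y) = 0\<^sub>v d" using e P xc yc by (simp add: mult_minus_distrib_mat_vec)
    ultimately have "x - y = 0\<^sub>v nc" using inj by blast
    note xy0 = this
    show "x = y"
    proof (rule eq_vecI)
      fix i assume i: "i < dim_vec y"
      have "(x - y) $ i = 0" using xy0 i yc by simp
      thus "x $ i = y $ i" using xc yc i by simp
    qed (use xc yc in auto)
  qed
  have Bsub: "B \<subseteq> mat_kernel C" using bas unfolding K.Ker.basis_def by auto
  have liB: "K.lin_indpt B" using bas unfolding K.Ker.basis_def by auto
  have TBc: "?T ` B \<subseteq> carrier_vec d" using Bsub kc P by auto
  have li: "W.lin_indpt (?T ` B)"
  proof
    assume "W.lin_dep (?T ` B)"
    then obtain A a v where fA: "finite A" and AB: "A \<subseteq> ?T ` B" and a: "a \<in> A \<rightarrow> UNIV"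
      and lc: "W.lincomb a A = 0\<^sub>v d" and vA: "v \<in> A" and av: "a v \<noteq> 0"
      unfolding W.lin_dep_def by auto
    define A' where "A' = B \<inter> ?T -` A"
    have A'B: "A' \<subseteq> B" and fA': "finite A'" using fB unfolding A'_def by auto
    have TA': "?T ` A' = A" using AB unfolding A'_def by auto
    have A'K: "A' \<subseteq> mat_kernel C" using A'B Bsub by auto
    have "W.lincomb a A = ?T (K.lincomb (a \<circ> ?T) A')"
      unfolding TA'[symmetric]
      by (rule L.lincomb_linear_image, insert injT A'K fA', auto)
    hence z: "?T (K.lincomb (a \<circ> ?T) A') = ?T (0\<^sub>v nc)" using lc P0 by simp
    have lcK: "K.lincomb (a \<circ> ?T) A' \<in> mat_kernel C"
      using K.Ker.lincomb_closed[OF A'K] by auto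
    have "0\<^sub>v nc \<in> mat_kernel C" using K.Ker.zero_closed by simp
    with z lcK injT have lc0: "K.lincomb (a \<circ> ?T) A' = 0\<^sub>v nc" by (auto dest: inj_onD)
    obtain v' where v': "v' \<in> A'" "?T v' = v" using vA TA' by auto
    have "K.lin_dep B"
      unfolding K.Ker.lin_dep_def
      by (rule exI[of _ A'], rule exI[of _ "a \<circ> ?T"], rule exI[of _ v'],
          insert fA' A'B lc0 v' av, auto)
    with liB show False by simp
  qed
  have "card (?T ` B) \<le> d" using W.li_le_dim(2)[OF W.fin_dim TBc li] W.dim_is_n by simp
  moreover have "card (?T ` B) = card B"
    by (rule card_image, rule inj_on_subset[OF injT Bsub])
  ultimately show ?thesis using dimK by simp
qed
lemma jordan_matrix_struct:
  fixes n_as :: "(nat \<times> 'a :: comm_ring_1) list"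
  assumes "\<forall>(m,e)\<in>set n_as. m > 0 \<and> e = 1"
  shows "\<exists>St. St \<subseteq> {..<sum_list (map fst n_as)} \<and> card St = length n_as \<and>
    (sum_list (map fst n_as) > 0 \<longrightarrow> 0 \<in> St) \<and>
    (\<forall>i j. i < sum_list (map fst n_as) \<longrightarrow> j < sum_list (map fst n_as) \<longrightarrow>
      jordan_matrix n_as $$ (i,j) = (if i = j then 1 else if j = Suc i \<and> j \<notin> St then 1 else 0))"
  using assms
proof (induction n_as)
  case Nil
  show ?case by (intro exI[of _ "{}"], auto)
next
  case (Cons me rest)
  obtain m e where me: "me = (m,e)" by force
  with Cons.prems have m: "m > 0" and e: "e = 1" by auto
  from Cons obtain St where St: "St \<subseteq> {..<sum_list (map fst rest)}" and cSt: "card St = length rest"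
    and St0: "sum_list (map fst rest) > 0 \<longrightarrow> 0 \<in> St"
    and ent: "\<forall>i j. i < sum_list (map fst rest) \<longrightarrow> j < sum_list (map fst rest) \<longrightarrow>
      jordan_matrix rest $$ (i,j) = (if i = j then 1 else if j = Suc i \<and> j \<notin> St then 1 else 0)"
    by auto
  define N' where "N' = sum_list (map fst rest)"
  define St' where "St' = insert 0 ((+) m ` St)"
  have JM: "jordan_matrix (me # rest) = four_block_mat (jordan_block m e) (0\<^sub>m m N') (0\<^sub>m N' m) (jordan_matrix rest)"
    unfolding me N'_def by (rule jordan_matrix_Cons)
  have N: "sum_list (map fst (me # rest)) = m + N'" unfolding me N'_def by simp
  show ?case
  proof (rule exI[of _ St'], intro conjI allI impI)
    show "St' \<subseteq> {..<sum_list (map fst (me # rest))}" unfolding N St'_def using St m N'_def by auto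
    have "0 \<notin> (+) m ` St" using m by auto
    moreover have "card ((+) m ` St) = card St" by (rule card_image, auto)
    moreover have "finite St" using St finite_subset by blast
    ultimately show "card St' = length (me # rest)" unfolding St'_def using cSt by simp
    show "0 \<in> St'" unfolding St'_def by simp
    fix i j assume i: "i < sum_list (map fst (me # rest))" and j: "j < sum_list (map fst (me # rest))"
    have mem: "j \<ge> m \<Longrightarrow> (j \<in> St') = (j - m \<in> St)" unfolding St'_def using m by force
    show "jordan_matrix (me # rest) $$ (i, j) = (if i = j then 1 else if j = Suc i \<and> j \<notin> St' then 1 else 0)"
    proof (cases "i < m")
      case True note im = this
      show ?thesis
      proof (cases "j < m")
        case True
        have "j \<notin> (+) m ` St" using True by auto
        hence "(j \<in> St') = (j = 0)" unfolding St'_def by auto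
        thus ?thesis unfolding JM using i j im True N e by (auto simp: jordan_block_index N'_def)
      next
        case False
        have "j = Suc i \<Longrightarrow> j - m = 0" using im False by auto
        moreover have "j = Suc i \<Longrightarrow> 0 \<in> St" using St0 j N False unfolding N'_def by auto
        ultimately have "j = Suc i \<Longrightarrow> j \<in> St'" using mem False by auto
        thus ?thesis unfolding JM using i j im False N by (auto simp: N'_def)
      qed
    next
      case False note im = this
      show ?thesis
      proof (cases "j < m")
        case True
        thus ?thesis unfolding JM using i j im N by (auto simp: N'_def)
      next
        case False
        have eq: "(i = j) = (i - m = j - m)" "(j = Suc i) = (j - m = Suc (i - m))" using im False by auto
        show ?thesis unfolding JM using i j im False N ent mem eq unfolding N'_def by auto
      qed
    qed
  qed
qed

lemma row_sum_J:
  fixes J :: "'a :: field mat"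
  assumes ent: "\<forall>i j. i<N \<longrightarrow> j<N \<longrightarrow> J $$ (i,j) = (if i = j then 1 else if j = Suc i \<and> j \<notin> St then 1 else 0)"
  and b: "b < N"
  shows "(\<Sum>d<N. J $$ (b,d) * g d) = g b + (if Suc b < N \<and> Suc b \<notin> St then g (Suc b) else 0)"
proof -
  have "(\<Sum>d<N. J $$ (b,d) * g d) = (\<Sum>d<N. (if d = b then g d else 0) + (if d = Suc b \<and> Suc b < N \<and> Suc b \<notin> St then g d else 0))"
    by (rule sum.cong, insert ent b, auto)
  also have "\<dots> = (\<Sum>d<N. (if d = b then g d else 0)) + (\<Sum>d<N. (if d = Suc b \<and> Suc b < N \<and> Suc b \<notin> St then g d else 0))"
    by (rule sum.distrib)
  also have "(\<Sum>d<N. (if d = b then g d else 0)) = g b" using b by (simp add: sum.delta')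
  also have "(\<Sum>d<N. (if d = Suc b \<and> Suc b < N \<and> Suc b \<notin> St then g d else 0)) = (if Suc b < N \<and> Suc b \<notin> St then g (Suc b) else 0)"
    by (cases "Suc b < N \<and> Suc b \<notin> St", auto simp: sum.delta')
  finally show ?thesis .
qed

lemma core_bound:
  fixes J :: "'a :: field mat"
  assumes J: "J \<in> carrier_mat N N" and St: "St \<subseteq> {..<N}" and St0: "N > 0 \<longrightarrow> 0 \<in> St"
  and ent: "\<forall>i j. i<N \<longrightarrow> j<N \<longrightarrow> J $$ (i,j) = (if i = j then 1 else if j = Suc i \<and> j \<notin> St then 1 else 0)"
  shows "\<exists>p. real (kernel_dim (char_matrix (kron_mat J J) 1)) \<le> real (card St * N) - real p * real (N - card St)
     \<and> real p \<ge> 2 * real (card St) - real N"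
proof -
  define s where "s a = (Suc a < N \<and> Suc a \<notin> St)" for a
  define K where "K = kron_mat J J"
  have K: "K \<in> carrier_mat (N*N) (N*N)" unfolding K_def using J by auto
  define E where "E = {a. a < N \<and> \<not> s a}"
  define F where "F = St \<times> {..<N} - (St \<inter> E) \<times> ({..<N} - St)"
  have finSt: "finite St" using St finite_subset by blast
  have finF: "finite F" unfolding F_def using finSt by auto
  have cardF: "card F = card St * N - card (St \<inter> E) * (N - card St)"
  proof -
    have sub: "(St \<inter> E) \<times> ({..<N} - St) \<subseteq> St \<times> {..<N}" by auto
    have "card F = card (St \<times> {..<N}) - card ((St \<inter> E) \<times> ({..<N} - St))"
      unfolding F_def by (rule card_Diff_subset, insert finSt, auto)
    moreover have "card ({..<N} - St) = N - card St" by (subst card_Diff_subset[OF finSt St]) simp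
    ultimately show ?thesis by (simp add: card_cartesian_product)
  qed
  obtain f where f: "bij_betw f {0..<card F} F" using ex_bij_betw_nat_finite[OF finF] by blast
  define idx where "idx ab = fst ab * N + snd ab" for ab
  define P where "P = mat (card F) (N*N) (\<lambda>(r,c). if c = idx (f r) then (1 :: 'a) else 0)"
  have P: "P \<in> carrier_mat (card F) (N*N)" unfolding P_def by auto
  have idxF: "ab \<in> F \<Longrightarrow> idx ab < N*N" for ab
  proof -
    assume "ab \<in> F"
    hence a: "fst ab < N" and b: "snd ab < N" unfolding F_def using St by auto
    have "fst ab * N + snd ab < Suc (fst ab) * N" using b by simp
    also have "\<dots> \<le> N * N" using a by (intro mult_le_mono1) simp
    finally show ?thesis unfolding idx_def .
  qed
  have Pv: "r < card F \<Longrightarrow> v \<in> carrier_vec (N*N) \<Longrightarrow> (P *\<^sub>v v) $ r = v $ idx (f r)" for r v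
  proof -
    assume r: "r < card F" and v: "v \<in> carrier_vec (N*N)"
    have fr: "f r \<in> F" using f r unfolding bij_betw_def by auto
    have "(P *\<^sub>v v) $ r = (\<Sum>c\<in>{0..<N*N}. (if c = idx (f r) then 1 else 0) * v $ c)"
      using r v unfolding P_def by (simp add: scalar_prod_def row_def)
    also have "\<dots> = v $ idx (f r)" using idxF[OF fr]
      by (subst sum.cong[OF refl, of _ _ "\<lambda>c. if c = idx (f r) then v $ c else 0"], auto simp: sum.delta')
    finally show ?thesis .
  qed
  have keq: "(if s b then v $ idx (a, Suc b) else 0) + (if s a then v $ idx (Suc a, b) + (if s b then v $ idx (Suc a, Suc b) else 0) else 0) = 0"
    if v: "v \<in> mat_kernel (char_matrix K 1)" and a: "a < N" and b: "b < N" for v a b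
  proof -
    have CK: "char_matrix K 1 \<in> carrier_mat (N*N) (N*N)" using K by simp
    have vc: "v \<in> carrier_vec (N*N)" and z: "char_matrix K 1 *\<^sub>v v = 0\<^sub>v (N*N)" using mat_kernelD[OF CK v] by auto
    have ab: "idx (a,b) < N*N" unfolding idx_def
    proof -
      have "a * N + b < Suc a * N" using b by simp
      also have "\<dots> \<le> N * N" using a by (intro mult_le_mono1) simp
      finally show "fst (a,b) * N + snd (a,b) < N*N" by simp
    qed
    have dm: "idx (a,b) div N = a" "idx (a,b) mod N = b" unfolding idx_def using b by auto
    have "0 = (char_matrix K 1 *\<^sub>v v) $ idx (a,b)" using z ab by simp
    also have "\<dots> = (\<Sum>t<N*N. (K $$ (idx (a,b), t) - (if idx (a,b) = t then 1 else 0)) * v $ t)"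
      using ab K vc by (simp add: char_matrix_def scalar_prod_def row_def lessThan_atLeast0)
    also have "\<dots> = (\<Sum>t<N*N. K $$ (idx (a,b), t) * v $ t) - (\<Sum>t<N*N. (if idx (a,b) = t then 1 else 0) * v $ t)"
      by (simp add: left_diff_distrib sum_subtractf)
    also have "(\<Sum>t<N*N. (if idx (a,b) = t then 1 else 0) * v $ t) = v $ idx (a,b)"
      using ab by (subst sum.cong[OF refl, of _ _ "\<lambda>t. if idx (a,b) = t then v $ t else 0"], auto simp: sum.delta)
    also have "(\<Sum>t<N*N. K $$ (idx (a,b), t) * v $ t) = (\<Sum>c<N. \<Sum>d<N. K $$ (idx (a,b), c*N+d) * v $ (c*N+d))"
      by (rule sum_div_mod_split)
    also have "\<dots> = (\<Sum>c<N. J $$ (a,c) * (\<Sum>d<N. J $$ (b,d) * v $ idx (c,d)))"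
    proof (intro sum.cong refl)
      fix c assume c: "c \<in> {..<N}"
      show "(\<Sum>d<N. K $$ (idx (a,b), c*N+d) * v $ (c*N+d)) = J $$ (a,c) * (\<Sum>d<N. J $$ (b,d) * v $ idx (c,d))"
        unfolding sum_distrib_left
      proof (intro sum.cong refl)
        fix d assume d: "d \<in> {..<N}"
        have cd: "c*N+d < N*N"
        proof -
          have "c * N + d < Suc c * N" using d by simp
          also have "\<dots> \<le> N * N" using c by (intro mult_le_mono1) simp
          finally show ?thesis .
        qed
        have dm2: "(c*N+d) div N = c" "(c*N+d) mod N = d" using d by auto
        show "K $$ (idx (a,b), c*N+d) * v $ (c*N+d) = J $$ (a,c) * (J $$ (b,d) * v $ idx (c,d))"
          unfolding K_def using J ab cd
          using d b by (simp add: kron_index dm dm2 idx_def)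
      qed
    qed
    also have "\<dots> = (\<Sum>c<N. J $$ (a,c) * (v $ idx (c,b) + (if s b then v $ idx (c, Suc b) else 0)))"
      by (rule sum.cong[OF refl], subst row_sum_J[OF ent b], auto simp: s_def)
    also have "\<dots> = (v $ idx (a,b) + (if s b then v $ idx (a, Suc b) else 0)) +
         (if s a then (v $ idx (Suc a,b) + (if s b then v $ idx (Suc a, Suc b) else 0)) else 0)"
      by (subst row_sum_J[OF ent a], auto simp: s_def)
    finally show ?thesis by (simp add: algebra_simps)
  qed
  have Fmem: "(a,b) \<in> F \<longleftrightarrow> a \<in> St \<and> b < N \<and> \<not> (\<not> s a \<and> b \<notin> St)" for a b
    unfolding F_def E_def using St by auto
  have inj: "v = 0\<^sub>v (N*N)" if v: "v \<in> mat_kernel (char_matrix K 1)" and Pz: "P *\<^sub>v v = 0\<^sub>v (card F)" for v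
  proof -
    have CK: "char_matrix K 1 \<in> carrier_mat (N*N) (N*N)" using K by simp
    have vc: "v \<in> carrier_vec (N*N)" using mat_kernelD[OF CK v] by auto
    have zF: "v $ idx ab = 0" if ab: "ab \<in> F" for ab
    proof -
      obtain r where r: "r < card F" "f r = ab" using f ab unfolding bij_betw_def by force
      have "(P *\<^sub>v v) $ r = 0" using Pz r by simp
      thus ?thesis using Pv[OF r(1) vc] r by simp
    qed
    have all0: "\<forall>b<N. v $ idx (a,b) = 0" if a: "a < N" for a
      using a
    proof (induction a rule: less_induct)
      case (less a)
      show ?case
      proof (cases "a \<in> St")
        case True
        show ?thesis
        proof (intro allI impI)
          fix b assume b: "b < N"
          show "v $ idx (a,b) = 0"
          proof (cases "(a,b) \<in> F")
            case True thus ?thesis using zF by auto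
          next
            case False
            with Fmem[of a b] \<open>a \<in> St\<close> b have sa: "\<not> s a" and bS: "b \<notin> St" by auto
            have "b \<noteq> 0"
            proof
              assume "b = 0" with bS St0 b show False by auto
            qed
            then obtain b' where b': "b = Suc b'" by (cases b, auto)
            have sb': "s b'" unfolding s_def using b bS b' by auto
            have "b' < N" using b b' by auto
            from keq[OF v less.prems this] sa sb' b' show ?thesis by simp
          qed
        qed
      next
        case False
        have "a \<noteq> 0"
        proof
          assume "a = 0" with False St0 less.prems show False by auto
        qed
        then obtain a' where a': "a = Suc a'" by (cases a, auto)
        have sa': "s a'" unfolding s_def using less.prems False a' by auto
        have a'N: "a' < N" using less.prems a' by auto
        have IH: "\<forall>b<N. v $ idx (a',b) = 0" using less.IH[of a'] a' a'N by auto
        show ?thesis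
        proof (intro allI impI)
          fix b assume "b < N"
          thus "v $ idx (a,b) = 0"
          proof (induction "N - b" arbitrary: b rule: less_induct)
            case (less b)
            have e: "v $ idx (a, Suc b) = 0" if sb: "s b"
            proof -
              have "Suc b < N" using sb unfolding s_def by auto
              thus ?thesis using less.hyps[of "Suc b"] less.prems by auto
            qed
            have e2: "v $ idx (a', Suc b) = 0" if sb: "s b"
            proof -
              have "Suc b < N" using sb unfolding s_def by auto
              thus ?thesis using IH by auto
            qed
            from keq[OF v a'N less.prems] sa' a' e e2 show ?case by (cases "s b", auto)
          qed
        qed
      qed
    qed
    show ?thesis
    proof (rule eq_vecI)
      fix i assume i: "i < dim_vec (0\<^sub>v (N*N) :: 'a vec)"
      hence i': "i < N*N" by simp
      have "i = idx (i div N, i mod N)" unfolding idx_def by simp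
      moreover have "i div N < N" "i mod N < N" using div_mod_lt[OF i'] by auto
      ultimately have "v $ i = 0" using all0 by metis
      thus "v $ i = 0\<^sub>v (N*N) $ i" using i' by simp
    qed (insert vc, auto)
  qed
  have kd: "kernel_dim (char_matrix K 1) \<le> card F"
    by (rule kernel_dim_le_inj[OF _ P inj, of _ "N*N"], insert K, auto)
  define k where "k = card St"
  define p where "p = card (St \<inter> E)"
  have kN: "k \<le> N" unfolding k_def using card_mono[OF _ St] by simp
  have pk: "p \<le> k" unfolding p_def k_def using finSt by (intro card_mono, auto)
  have pbound: "real p \<ge> 2 * real k - real N"
  proof (cases "N = 0")
    case True thus ?thesis using kN by simp
  next
    case False
    hence N0: "0 \<in> St" using St0 by auto
    have finE: "finite E" unfolding E_def by auto
    have "bij_betw Suc E ((St - {0}) \<union> {N})"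
    proof (rule bij_betw_byWitness[of _ "\<lambda>x. x - 1"])
      show "\<forall>a\<in>E. Suc a - 1 = a" by simp
      show "\<forall>a\<in>(St - {0}) \<union> {N}. Suc (a - 1) = a" using False by auto
      show "Suc ` E \<subseteq> St - {0} \<union> {N}" unfolding E_def s_def by auto
      show "(\<lambda>x. x - 1) ` (St - {0} \<union> {N}) \<subseteq> E" unfolding E_def s_def using St False by force
    qed
    hence "card E = card ((St - {0}) \<union> {N})" by (rule bij_betw_same_card)
    also have "\<dots> = card (St - {0}) + 1" using St finSt by (subst card_Un_disjoint, auto)
    also have "\<dots> = k" unfolding k_def using N0 finSt card_Diff_singleton
      by (metis One_nat_def Suc_pred card_gt_0_iff empty_iff add.commute plus_1_eq_Suc)
    finally have cE: "card E = k" .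
    have "card (St \<union> E) \<le> N" using card_mono[of "{..<N}" "St \<union> E"] St unfolding E_def by auto
    moreover have "card (St \<union> E) + card (St \<inter> E) = card St + card E"
      using card_Un_Int[OF finSt finE] by simp
    ultimately show ?thesis unfolding p_def k_def using cE k_def by linarith
  qed
  show ?thesis
  proof (rule exI[of _ p], intro conjI)
    have "card F = k * N - p * (N - k)" using cardF unfolding k_def p_def .
    moreover have "p * (N - k) \<le> k * N" using pk kN by (simp add: mult_le_mono)
    ultimately have "real (card F) = real (k*N) - real p * real (N - k)" by (simp add: of_nat_diff)
    with kd show "real (kernel_dim (char_matrix (kron_mat J J) 1)) \<le> real (card St * N) - real p * real (N - card St)"
      unfolding K_def k_def by linarith
    show "real p \<ge> 2 * real (card St) - real N" using pbound unfolding k_def .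
  qed
qed
lemma poly_blocks_zero:
  fixes xs :: "(nat \<times> 'a :: comm_ring_1) list"
  assumes "(m,e) \<in> set xs" "m > 0"
  shows "poly (\<Prod>(n,a)\<leftarrow>xs. [:- a, 1:] ^ n) e = 0"
  using assms
proof (induction xs)
  case (Cons x xs)
  obtain n a where x: "x = (n,a)" by force
  show ?case
  proof (cases "x = (m,e)")
    case True
    then show ?thesis using Cons.prems by (simp add: x zero_power)
  next
    case False
    then have "(m,e) \<in> set xs" using Cons.prems by (auto simp: x)
    then show ?thesis using Cons by (simp add: x)
  qed
qed simp

lemma poly_lin_zero:
  fixes as :: "'a :: idom list"
  assumes "poly (\<Prod>a\<leftarrow>as. [:- a, 1:]) e = 0"
  shows "e \<in> set as"
  using assms by (induction as, auto)

lemma sum_min1: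
  assumes "\<forall>x\<in>set xs. (x::nat) > 0"
  shows "sum_list (map (min 1) xs) = length xs"
  using assms by (induction xs, auto)

lemma jnf_exists_complex:
  fixes A :: "complex mat"
  assumes A: "A \<in> carrier_mat n n"
  shows "jordan_nf A (SOME n_as. jordan_nf A n_as)"
proof -
  from char_poly_factorized[OF A] obtain as where "char_poly A = (\<Prod>a\<leftarrow>as. [:- a, 1:])" by auto
  from jordan_nf_exists[OF A this] have "\<exists>n_as. jordan_nf A n_as" .
  thus ?thesis by (rule someI_ex)
qed

lemma blocks_count:
  fixes B :: "complex mat"
  assumes B: "B \<in> carrier_mat N N"
  and ev: "\<And>e. poly (char_poly B) e = 0 \<Longrightarrow> e = 1"
  shows "num_jordan_blocks B = dim_gen_eigenspace B 1 1"
proof -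
  define m_bs where "m_bs = (SOME n_as. jordan_nf B n_as)"
  have jnf: "jordan_nf B m_bs" unfolding m_bs_def by (rule jnf_exists_complex[OF B])
  have "char_poly B = char_poly (jordan_matrix m_bs)"
    by (rule char_poly_similar, insert jnf, simp add: jordan_nf_def)
  hence cp: "char_poly B = (\<Prod>(n,a)\<leftarrow>m_bs. [:- a, 1:] ^ n)" unfolding jordan_matrix_char_poly .
  have pos: "\<forall>(m,e)\<in>set m_bs. m > 0" using jnf unfolding jordan_nf_def by force
  have e1: "\<forall>(m,e)\<in>set m_bs. e = 1"
  proof (intro ballI, clarify)
    fix m e assume me: "(m,e) \<in> set m_bs"
    hence "m > 0" using pos by auto
    from poly_blocks_zero[OF me this] cp ev show "e = 1" by simp
  qed
  have "dim_gen_eigenspace B 1 1 = (\<Sum> n \<leftarrow> map fst [(n, e)\<leftarrow>m_bs . e = 1]. min 1 n)"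
    by (rule dim_gen_eigenspace[OF jnf])
  also have "[(n, e)\<leftarrow>m_bs . e = 1] = m_bs" using e1 by (induction m_bs, auto)
  also have "(\<Sum> n \<leftarrow> map fst m_bs. min 1 n) = length (map fst m_bs)"
    by (rule sum_min1, insert pos, auto)
  finally show ?thesis unfolding num_jordan_blocks_def m_bs_def[symmetric] by simp
qed

theorem mainTheorem13:
  fixes A :: "complex mat" and n :: nat
  assumes "A \<in> carrier_mat n n"
    and "invertible_mat A"
    and "\<And>a. eigenvalue A a \<Longrightarrow> a = 1"
  shows "J (kron_mat A A) \<le> J A \<and>
         J (kron_mat A A) \<le> (J A)\<^sup>2 + (1 - J A)\<^sup>2"
proof -
  note A = assms(1)
  define n_as where "n_as = (SOME n_as. jordan_nf A n_as)"
  have jnf: "jordan_nf A n_as" unfolding n_as_def by (rule jnf_exists_complex[OF A])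
  have sim: "similar_mat A (jordan_matrix n_as)" using jnf unfolding jordan_nf_def by simp
  have cp: "char_poly A = (\<Prod>(n,a)\<leftarrow>n_as. [:- a, 1:] ^ n)"
    unfolding char_poly_similar[OF sim] jordan_matrix_char_poly ..
  have pos: "\<forall>(m,e)\<in>set n_as. m > 0" using jnf unfolding jordan_nf_def by force
  have blk: "\<forall>(m,e)\<in>set n_as. m > 0 \<and> e = 1"
  proof (intro ballI, clarify, intro conjI)
    fix m e assume me: "(m,e) \<in> set n_as"
    thus m0: "m > 0" using pos by auto
    from poly_blocks_zero[OF me m0] cp have "poly (char_poly A) e = 0" by simp
    hence "eigenvalue A e" using eigenvalue_root_char_poly[OF A] by simp
    thus "e = 1" using assms(3) by simp
  qed
  define JM where "JM = jordan_matrix n_as"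
  define N where "N = sum_list (map fst n_as)"
  have JMc: "JM \<in> carrier_mat N N" unfolding JM_def N_def by simp
  obtain n' P Q where c: "{A, jordan_matrix n_as, P, Q} \<subseteq> carrier_mat n' n'"
    using similar_matD[OF sim] by blast
  have nN: "n = N" using A JMc c unfolding JM_def by auto
  have "\<exists>St. St \<subseteq> {..<N} \<and> card St = length n_as \<and>
    (N > 0 \<longrightarrow> 0 \<in> St) \<and>
    (\<forall>i j. i < N \<longrightarrow> j < N \<longrightarrow>
      JM $$ (i,j) = (if i = j then 1 else if j = Suc i \<and> j \<notin> St then 1 else 0))"
    unfolding JM_def N_def by (rule jordan_matrix_struct[OF blk])
  then obtain St where H: "St \<subseteq> {..<N} \<and> card St = length n_as \<and>
    (N > 0 \<longrightarrow> 0 \<in> St) \<and>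
    (\<forall>i j. i < N \<longrightarrow> j < N \<longrightarrow>
      JM $$ (i,j) = (if i = j then 1 else if j = Suc i \<and> j \<notin> St then 1 else 0))" ..
  note St = conjunct1[OF H]
  note cSt = conjunct1[OF conjunct2[OF H]]
  note St0 = conjunct1[OF conjunct2[OF conjunct2[OF H]]]
  note ent = conjunct2[OF conjunct2[OF conjunct2[OF H]]]
  have "\<exists>p. real (kernel_dim (char_matrix (kron_mat JM JM) 1)) \<le> real (card St * N) - real p * real (N - card St)
     \<and> real p \<ge> 2 * real (card St) - real N" by (rule core_bound[OF JMc St St0 ent])
  then obtain p where H2: "real (kernel_dim (char_matrix (kron_mat JM JM) 1)) \<le> real (card St * N) - real p * real (N - card St)
     \<and> real p \<ge> 2 * real (card St) - real N" ..
  note kd = conjunct1[OF H2]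
  note pb = conjunct2[OF H2]
  define k where "k = card St"
  have kA: "num_jordan_blocks A = k" unfolding num_jordan_blocks_def n_as_def[symmetric] k_def cSt ..
  have kN: "k \<le> N" unfolding k_def using card_mono[OF _ St] by simp
  define B where "B = kron_mat A A"
  define KJ where "KJ = kron_mat JM JM"
  have Bc: "B \<in> carrier_mat (N*N) (N*N)" unfolding B_def using A nN by auto
  have KJc: "KJ \<in> carrier_mat (N*N) (N*N)" unfolding KJ_def using JMc by auto
  have simB: "similar_mat B KJ" unfolding B_def KJ_def JM_def by (rule similar_kron[OF sim])
  have utJ: "JM $$ (i,j) = 0" if "i < N" "j < N" "j < i" for i j using ent that by auto
  have ut: "upper_triangular KJ"
  proof (rule upper_triangularI)
    fix i j assume ji: "j < i" and i: "i < dim_row KJ"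
    have i': "i < N*N" using i KJc by auto
    have j': "j < N*N" using ji i' by auto
    note ii = div_mod_lt[OF i'] and jj = div_mod_lt[OF j']
    have "j div N < i div N \<or> (j div N = i div N \<and> j mod N < i mod N)"
    proof (cases "j div N = i div N")
      case True
      have "j mod N < i mod N"
      proof (rule ccontr)
        assume "\<not> j mod N < i mod N"
        hence "i mod N \<le> j mod N" by simp
        moreover have "i = i div N * N + i mod N" "j = j div N * N + j mod N" by simp_all
        moreover have "j div N * N = i div N * N" using True by simp
        ultimately have "i \<le> j" by linarith
        thus False using ji by simp
      qed
      thus ?thesis using True by simp
    next
      case False
      have "j div N \<le> i div N" using ji by (simp add: div_le_mono)
      thus ?thesis using False by simp
    qed
    thus "KJ $$ (i,j) = 0" unfolding KJ_def using i' j' ii jj JMc utJ by (auto simp: kron_index)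
  qed
  have diag1: "\<forall>a\<in>set (diag_mat KJ). a = 1"
  proof
    fix a assume "a \<in> set (diag_mat KJ)"
    then obtain i where i: "i < N*N" and a: "a = KJ $$ (i,i)" unfolding diag_mat_def using KJc by auto
    note ii = div_mod_lt[OF i]
    show "a = 1" unfolding a KJ_def using i ii JMc ent by (simp add: kron_index)
  qed
  have evB: "e = 1" if "poly (char_poly B) e = 0" for e
  proof -
    have "char_poly B = char_poly KJ" by (rule char_poly_similar[OF simB])
    also have "\<dots> = (\<Prod>a\<leftarrow>diag_mat KJ. [:- a, 1:])" by (rule char_poly_upper_triangular[OF KJc ut])
    finally have "e \<in> set (diag_mat KJ)" using that poly_lin_zero by metis
    thus ?thesis using diag1 by auto
  qed
  have "num_jordan_blocks B = dim_gen_eigenspace B 1 1" by (rule blocks_count[OF Bc evB])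
  also have "\<dots> = dim_gen_eigenspace KJ 1 1" using dim_gen_eigenspace_similar[OF simB] by simp
  also have "\<dots> = kernel_dim (char_matrix KJ 1)"
    unfolding dim_gen_eigenspace_def using KJc by simp
  finally have dB: "num_jordan_blocks B = kernel_dim (char_matrix KJ 1)" .
  define d where "d = kernel_dim (char_matrix KJ 1)"
  have JB: "J B = real d / (real N * real N)" unfolding J_def dB d_def using Bc by simp
  have JA: "J A = real k / real N" unfolding J_def kA using A nN by simp
  have kd': "real d \<le> real k * real N - real p * (real N - real k)"
    using kd kN unfolding d_def KJ_def k_def by (simp add: of_nat_diff)
  have pb': "real p \<ge> 2 * real k - real N" using pb unfolding k_def .
  have p0: "real p \<ge> 0" by simp
  have kN': "real k \<le> real N" using kN by simp
  have b1: "real d \<le> real k * real N"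
    using kd' p0 kN' by (smt (verit) mult_nonneg_nonneg)
  have "(real N - real k) * (2 * real k - real N - real p) \<le> 0"
    using pb' kN' by (intro mult_nonneg_nonpos, auto)
  hence b2: "real d \<le> real k ^ 2 + (real N - real k) ^ 2"
    using kd' by (simp add: power2_eq_square algebra_simps)
  show ?thesis
  proof (cases "N = 0")
    case True
    thus ?thesis unfolding JB JA B_def[symmetric] by simp
  next
    case False
    hence Np: "real N > 0" by simp
    have "J B \<le> J A" unfolding B_def[symmetric] JB JA using b1 Np
      by (simp add: field_simps)
    moreover have "J B \<le> (J A)\<^sup>2 + (1 - J A)\<^sup>2"
    proof -
      have "(J A)\<^sup>2 + (1 - J A)\<^sup>2 = (real k ^ 2 + (real N - real k) ^ 2) / (real N * real N)"
        unfolding JA using Np by (simp add: field_simps power2_eq_square)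
      thus ?thesis unfolding JB using b2 Np by (simp add: divide_right_mono)
    qed
    ultimately show ?thesis unfolding B_def by simp
  qed
qed
end
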